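(* Let $f_1,\ldots,f_k:\mathbb{R}^n\to\Delta^n$ be the conversion functions of $k$ lossless (resp. finitely lossless) learning dynamics over $n$ actions, and let $\alpha_1,\ldots,\alpha_k\ge 0$ with $\sum_{\ell=1}^k\alpha_\ell=1$. Then the learning dynamic with conversion function $\sum_{\ell=1}^k\alpha_\ell f_\ell$ (the convex combination of the $k$ dynamics with parameters $\alpha_1,\ldots,\alpha_k$) is lossless (resp. finitely lossless).
   Context: $\Delta^n=\{\mathbf{x}\in\mathbb{R}^n: x_j\ge 0,\ \sum_j x_j=1\}$; $\mathbf{e}_j$ is the $j$-th standard basis vector. A learning dynamic over $n$ actions is specified by a conversion function $f:\mathbb{R}^n\to\Delta^n$: given an initial state $\mathbf{q}^0\in\mathbb{R}^n$ and an input function $\mathbf{p}:[0,\infty)\to\mathbb{R}^n$ square integrable on bounded intervals, the state is $\mathbf{q}(t)=\mathbf{q}^0+\int_0^t\mathbf{p}(\tau)\,d\tau$ and the strategy is $\mathbf{x}(t)=f(\mathbf{q}(t))$. The learning operator with shift $\mathbf{x}^*\in\mathbb{R}^n$ has state $\mathbf{q}$, input $\mathbf{p}$, output $\mathbf{x}-\mathbf{x}^*$; it is lossless via a storage function $L:\mathbb{R}^n\to\mathbb{R}$ if for every $\mathbf{q}^0$, every $\mathbf{p}$ and every $t\ge0$, $L(\mathbf{q}(t))=L(\mathbf{q}^0)+\int_0^t\langle\mathbf{p}(\tau),\mathbf{x}(\tau)-\mathbf{x}^*\rangle\,d\tau$, and finitely lossless if lossless via a storage function bounded from below. A learning dynamic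 is lossless if its learning operator with any shift is lossless; it is finitely lossless if for every action $j$ its learning operator with shift $\mathbf{e}_j$ is finitely lossless. *)

theory Defs
  imports "HOL-Analysis.Analysis"
begin

definition prob_simplex :: "(real^'n) set" where
  "prob_simplex = {x. (\<forall>j. 0 \<le> x $ j) \<and> (\<Sum>j\<in>UNIV. x $ j) = 1}"

definition conversion_function :: "(real^'n \<Rightarrow> real^'n) \<Rightarrow> bool" where
  "conversion_function f \<longleftrightarrow> (\<forall>q. f q \<in> prob_simplex)"

definition admissible_input :: "(real \<Rightarrow> real^'n) \<Rightarrow> bool" where
  "admissible_input p \<longleftrightarrow>
     (\<forall>t\<ge>0. set_borel_measurable lborel {0..t} p \<and>
             set_integrable lborel {0..t} (\<lambda>\<tau>. (norm (p \<tau>))\<^sup>2))"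

definition state :: "real^'n \<Rightarrow> (real \<Rightarrow> real^'n) \<Rightarrow> real \<Rightarrow> real^'n" where
  "state q0 p t = q0 + (LINT \<tau>:{0..t}|lborel. p \<tau>)"

definition lossless_via ::
  "(real^'n \<Rightarrow> real^'n) \<Rightarrow> real^'n \<Rightarrow> (real^'n \<Rightarrow> real) \<Rightarrow> bool" where
  "lossless_via f xs L \<longleftrightarrow>
     (\<forall>q0 p t. admissible_input p \<and> 0 \<le> t \<longrightarrow>
        set_integrable lborel {0..t} (\<lambda>\<tau>. p \<tau> \<bullet> (f (state q0 p \<tau>) - xs)) \<and>
        L (state q0 p t) = L q0 + (LINT \<tau>:{0..t}|lborel. p \<tau> \<bullet> (f (state q0 p \<tau>) - xs)))"

definition lossless_operator :: "(real^'n \<Rightarrow> real^'n) \<Rightarrow> real^'n \<Rightarrow> bool" where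
  "lossless_operator f xs \<longleftrightarrow> (\<exists>L. lossless_via f xs L)"

definition finitely_lossless_operator :: "(real^'n \<Rightarrow> real^'n) \<Rightarrow> real^'n \<Rightarrow> bool" where
  "finitely_lossless_operator f xs \<longleftrightarrow> (\<exists>L. bdd_below (range L) \<and> lossless_via f xs L)"

definition lossless_dynamic :: "(real^'n \<Rightarrow> real^'n) \<Rightarrow> bool" where
  "lossless_dynamic f \<longleftrightarrow> (\<forall>xs. lossless_operator f xs)"

definition finitely_lossless_dynamic :: "(real^'n \<Rightarrow> real^'n) \<Rightarrow> bool" where
  "finitely_lossless_dynamic f \<longleftrightarrow> (\<forall>j. finitely_lossless_operator f (axis j 1))"

end

theory Submission
  imports Defs
begin

lemma combo_via:
  fixes g :: "nat \<Rightarrow> real^'n \<Rightarrow> real^'n" and \<alpha> :: "nat \<Rightarrow> real"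
  assumes sum1: "(\<Sum>l<k. \<alpha> l) = 1"
    and lv: "\<And>l. l < k \<Longrightarrow> lossless_via (g l) xs (L l)"
  shows "lossless_via (\<lambda>q. \<Sum>l<k. \<alpha> l *\<^sub>R g l q) xs (\<lambda>q. \<Sum>l<k. \<alpha> l * L l q)"
  unfolding lossless_via_def
proof (intro allI impI conjI)
  fix q0 :: "real^'n" and p :: "real \<Rightarrow> real^'n" and t :: real
  assume a: "admissible_input p \<and> 0 \<le> t"
  have I: "\<And>l. l < k \<Longrightarrow> set_integrable lborel {0..t} (\<lambda>\<tau>. p \<tau> \<bullet> (g l (state q0 p \<tau>) - xs))"
    and E: "\<And>l. l < k \<Longrightarrow> L l (state q0 p t) = L l q0 + (LINT \<tau>:{0..t}|lborel. p \<tau> \<bullet> (g l (state q0 p \<tau>) - xs))"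
    using lv a unfolding lossless_via_def by blast+
  have pt: "p \<tau> \<bullet> ((\<Sum>l<k. \<alpha> l *\<^sub>R g l q) - xs) = (\<Sum>l<k. \<alpha> l * (p \<tau> \<bullet> (g l q - xs)))" for \<tau> q
  proof -
    have e1: "(\<Sum>l<k. \<alpha> l *\<^sub>R xs) = xs" by (simp add: scaleR_sum_left[symmetric] sum1)
    have "(\<Sum>l<k. \<alpha> l *\<^sub>R g l q) - xs = (\<Sum>l<k. \<alpha> l *\<^sub>R g l q) - (\<Sum>l<k. \<alpha> l *\<^sub>R xs)"
      by (simp only: e1)
    also have "\<dots> = (\<Sum>l<k. \<alpha> l *\<^sub>R (g l q - xs))"
      by (simp add: sum_subtractf[symmetric] scaleR_diff_right)
    finally have "(\<Sum>l<k. \<alpha> l *\<^sub>R g l q) - xs = (\<Sum>l<k. \<alpha> l *\<^sub>R (g l q - xs))" .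
    then show ?thesis by (simp add: inner_sum_right)
  qed
  let ?h = "\<lambda>l \<tau>. indicator {0..t} \<tau> *\<^sub>R (p \<tau> \<bullet> (g l (state q0 p \<tau>) - xs))"
  have eqf: "(\<lambda>\<tau>. indicator {0..t} \<tau> *\<^sub>R (p \<tau> \<bullet> ((\<Sum>l<k. \<alpha> l *\<^sub>R g l (state q0 p \<tau>)) - xs)))
     = (\<lambda>\<tau>. \<Sum>l<k. \<alpha> l * ?h l \<tau>)"
    by (rule ext) (simp only: pt real_scaleR_def sum_distrib_left mult.left_commute)
  have Ii: "\<And>l. l < k \<Longrightarrow> integrable lborel (?h l)" using I unfolding set_integrable_def by blast
  have Ii2: "\<And>l. l < k \<Longrightarrow> integrable lborel (\<lambda>x. indicator {0..t} x * (p x \<bullet> (g l (state q0 p x) - xs)))"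
    using Ii by simp
  have Int: "integrable lborel (\<lambda>\<tau>. \<Sum>l<k. \<alpha> l * ?h l \<tau>)"
    by (intro Bochner_Integration.integrable_sum integrable_mult_right) (rule Ii, simp)
  show "set_integrable lborel {0..t} (\<lambda>\<tau>. p \<tau> \<bullet> ((\<Sum>l<k. \<alpha> l *\<^sub>R g l (state q0 p \<tau>)) - xs))"
    unfolding set_integrable_def eqf by (rule Int)
  have "(LINT \<tau>:{0..t}|lborel. p \<tau> \<bullet> ((\<Sum>l<k. \<alpha> l *\<^sub>R g l (state q0 p \<tau>)) - xs))
      = (\<Sum>l<k. \<alpha> l * integral\<^sup>L lborel (?h l))"
    unfolding set_lebesgue_integral_def eqf
    by (subst Bochner_Integration.integral_sum) (auto intro!: integrable_mult_right Ii2)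
  also have "\<dots> = (\<Sum>l<k. \<alpha> l * (L l (state q0 p t) - L l q0))"
    by (intro sum.cong refl) (simp add: E set_lebesgue_integral_def)
  finally show "(\<Sum>l<k. \<alpha> l * L l (state q0 p t)) = (\<Sum>l<k. \<alpha> l * L l q0) +
      (LINT \<tau>:{0..t}|lborel. p \<tau> \<bullet> ((\<Sum>l<k. \<alpha> l *\<^sub>R g l (state q0 p \<tau>)) - xs))"
    by (simp add: algebra_simps sum_subtractf)
qed

theorem theorem5p5:
  fixes k :: nat and f :: "nat \<Rightarrow> real^'n \<Rightarrow> real^'n" and \<alpha> :: "nat \<Rightarrow> real"
  assumes conv: "\<And>l. l < k \<Longrightarrow> conversion_function (f l)"
    and nonneg: "\<And>l. l < k \<Longrightarrow> 0 \<le> \<alpha> l"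
    and sum1: "(\<Sum>l<k. \<alpha> l) = 1"
  shows "conversion_function (\<lambda>q. \<Sum>l<k. \<alpha> l *\<^sub>R f l q)
    \<and> ((\<forall>l<k. lossless_dynamic (f l)) \<longrightarrow> lossless_dynamic (\<lambda>q. \<Sum>l<k. \<alpha> l *\<^sub>R f l q))
    \<and> ((\<forall>l<k. finitely_lossless_dynamic (f l)) \<longrightarrow>
         finitely_lossless_dynamic (\<lambda>q. \<Sum>l<k. \<alpha> l *\<^sub>R f l q))"
proof (intro conjI impI)
  show "conversion_function (\<lambda>q. \<Sum>l<k. \<alpha> l *\<^sub>R f l q)"
    unfolding conversion_function_def prob_simplex_def
  proof (intro allI CollectI conjI)
    fix q j
    have c: "\<And>l. l < k \<Longrightarrow> (\<forall>j. 0 \<le> f l q $ j) \<and> (\<Sum>j\<in>UNIV. f l q $ j) = 1"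
      using conv unfolding conversion_function_def prob_simplex_def by blast
    show "0 \<le> (\<Sum>l<k. \<alpha> l *\<^sub>R f l q) $ j"
      using c nonneg by (auto simp add: sum_component intro!: sum_nonneg)
    have "(\<Sum>j\<in>UNIV. (\<Sum>l<k. \<alpha> l *\<^sub>R f l q) $ j) = (\<Sum>l<k. \<alpha> l * (\<Sum>j\<in>UNIV. f l q $ j))"
      by (simp add: sum_component sum_distrib_left sum.swap[of _ UNIV])
    also have "\<dots> = 1" using c sum1 by simp
    finally show "(\<Sum>j\<in>UNIV. (\<Sum>l<k. \<alpha> l *\<^sub>R f l q) $ j) = 1" .
  qed
next
  assume h: "\<forall>l<k. lossless_dynamic (f l)"
  show "lossless_dynamic (\<lambda>q. \<Sum>l<k. \<alpha> l *\<^sub>R f l q)"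
    unfolding lossless_dynamic_def lossless_operator_def
  proof
    fix xs
    have "\<forall>l<k. \<exists>L. lossless_via (f l) xs L"
      using h unfolding lossless_dynamic_def lossless_operator_def by blast
    then have "\<exists>L. \<forall>l<k. lossless_via (f l) xs (L l)" by (simp only: choice_iff')
    then obtain L where "\<And>l. l < k \<Longrightarrow> lossless_via (f l) xs (L l)" by blast
    then have "lossless_via (\<lambda>q. \<Sum>l<k. \<alpha> l *\<^sub>R f l q) xs (\<lambda>q. \<Sum>l<k. \<alpha> l * L l q)"
      by (rule combo_via[OF sum1])
    then show "\<exists>L. lossless_via (\<lambda>q. \<Sum>l<k. \<alpha> l *\<^sub>R f l q) xs L" by blast
  qed
next
  assume h: "\<forall>l<k. finitely_lossless_dynamic (f l)"
  show "finitely_lossless_dynamic (\<lambda>q. \<Sum>l<k. \<alpha> l *\<^sub>R f l q)"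
    unfolding finitely_lossless_dynamic_def finitely_lossless_operator_def
  proof
    fix j
    have "\<forall>l<k. \<exists>L. bdd_below (range L) \<and> lossless_via (f l) (axis j 1) L"
    proof (intro allI impI)
      fix l assume "l < k"
      then have "finitely_lossless_dynamic (f l)" using h by simp
      then have "finitely_lossless_operator (f l) (axis j 1)"
        unfolding finitely_lossless_dynamic_def by (rule spec)
      then show "\<exists>L. bdd_below (range L) \<and> lossless_via (f l) (axis j 1) L"
        unfolding finitely_lossless_operator_def .
    qed
    then have "\<exists>L. \<forall>l<k. bdd_below (range (L l)) \<and> lossless_via (f l) (axis j 1) (L l)"
      by (simp only: choice_iff')
    then obtain L where L: "\<forall>l<k. bdd_below (range (L l)) \<and> lossless_via (f l) (axis j 1) (L l)"
      by blast
    have "\<forall>l<k. \<exists>b. \<forall>q. b \<le> L l q"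
      using L unfolding bdd_below_def by blast
    then have "\<exists>b. \<forall>l<k. \<forall>q. b l \<le> L l q"
      by (simp only: choice_iff')
    then obtain b where b: "\<And>l q. l < k \<Longrightarrow> b l \<le> L l q"
      by blast
    have "bdd_below (range (\<lambda>q. \<Sum>l<k. \<alpha> l * L l q))"
      unfolding bdd_below_def
    proof (intro exI ballI)
      fix y assume "y \<in> range (\<lambda>q. \<Sum>l<k. \<alpha> l * L l q)"
      then obtain q where "y = (\<Sum>l<k. \<alpha> l * L l q)" by blast
      then show "(\<Sum>l<k. \<alpha> l * b l) \<le> y"
        by (auto intro!: sum_mono mult_left_mono b nonneg)
    qed
    moreover have "lossless_via (\<lambda>q. \<Sum>l<k. \<alpha> l *\<^sub>R f l q) (axis j 1) (\<lambda>q. \<Sum>l<k. \<alpha> l * L l q)"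
      by (rule combo_via[OF sum1]) (use L in blast)
    ultimately show "\<exists>L. bdd_below (range L) \<and> lossless_via (\<lambda>q. \<Sum>l<k. \<alpha> l *\<^sub>R f l q) (axis j 1) L"
      by blast
  qed
qed

end
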